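(* Let $G$ be a group and $n\ge1$. Then $\bigcup_{i=1}^n\operatorname{Spec}_R(G)^{(i)}\subseteq\operatorname{Spec}_R(G^n)$. Equality holds if $\operatorname{Aut}(G^n)=\operatorname{Aut}(G)\wr S_n$, i.e. if every automorphism of $G^n$ is of the form $(g_1,\dots,g_n)\mapsto(\phi_1(g_{\sigma(1)}),\dots,\phi_n(g_{\sigma(n)}))$ for some $\phi_1,\dots,\phi_n\in\operatorname{Aut}(G)$ and $\sigma\in S_n$.
   Context: $R(\psi)$ is the Reidemeister number of an endomorphism $\psi$ (number of classes of the relation $x\sim gx\psi(g)^{-1}$), and $\operatorname{Spec}_R(A)=\{R(\psi)\mid\psi\in\operatorname{Aut}(A)\}$. For $S\subseteq\mathbb{N}\cup\{\infty\}$, $S^{(i)}=\{a_1\cdots a_i\mid a_j\in S\}$ is the $i$-fold product set, with the convention $a\cdot\infty=\infty$. *)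

theory Defs
  imports "HOL-Algebra.Algebra" "HOL-Library.Extended_Nat" "HOL-Combinatorics.Permutations"
begin

definition reid_rel :: "('a, 'b) monoid_scheme \<Rightarrow> ('a \<Rightarrow> 'a) \<Rightarrow> ('a \<times> 'a) set" where
  "reid_rel G psi = {(x, y). x \<in> carrier G \<and> y \<in> carrier G \<and>
      (\<exists>g\<in>carrier G. y = g \<otimes>\<^bsub>G\<^esub> x \<otimes>\<^bsub>G\<^esub> inv\<^bsub>G\<^esub> (psi g))}"

definition reidemeister :: "('a, 'b) monoid_scheme \<Rightarrow> ('a \<Rightarrow> 'a) \<Rightarrow> enat" where
  "reidemeister G psi =
     (if finite (carrier G // reid_rel G psi) then enat (card (carrier G // reid_rel G psi)) else \<infinity>)"

definition spec_R :: "('a, 'b) monoid_scheme \<Rightarrow> enat set" where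
  "spec_R G = reidemeister G ` auto G"

definition prod_set :: "enat set \<Rightarrow> nat \<Rightarrow> enat set" where
  "prod_set S i = {(\<Prod>j<i. a j) | a. \<forall>j<i. a j \<in> S}"

definition dir_power :: "('a, 'b) monoid_scheme \<Rightarrow> nat \<Rightarrow> (nat \<Rightarrow> 'a) monoid" where
  "dir_power G n = product_group {..<n} (\<lambda>_. G)"

end

theory Submission
  imports Defs
begin

lemma reid_equiv:
  assumes "group H" "\<psi> \<in> hom H H"
  shows "equiv (carrier H) (reid_rel H \<psi>)"
proof -
  interpret H: group H by fact
  interpret h: group_hom H H \<psi> using assms by (simp add: group_hom_def group_hom_axioms_def)
  show ?thesis
  proof (rule equivI)
    show "reid_rel H \<psi> \<subseteq> carrier H \<times> carrier H" unfolding reid_rel_def by auto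
    show "refl_on (carrier H) (reid_rel H \<psi>)"
      unfolding refl_on_def reid_rel_def
      by (auto intro!: bexI[of _ "\<one>\<^bsub>H\<^esub>"])
    show "sym (reid_rel H \<psi>)"
    proof (rule symI)
      fix x y assume "(x, y) \<in> reid_rel H \<psi>"
      then obtain g where x: "x \<in> carrier H" and y: "y \<in> carrier H" and g: "g \<in> carrier H"
        and e: "y = g \<otimes>\<^bsub>H\<^esub> x \<otimes>\<^bsub>H\<^esub> inv\<^bsub>H\<^esub> (\<psi> g)" unfolding reid_rel_def by auto
      have "inv\<^bsub>H\<^esub> g \<otimes>\<^bsub>H\<^esub> y \<otimes>\<^bsub>H\<^esub> inv\<^bsub>H\<^esub> (\<psi> (inv\<^bsub>H\<^esub> g)) = x"
        using x g by (simp add: e h.hom_inv H.m_assoc; simp add: H.m_assoc[symmetric])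
      then show "(y, x) \<in> reid_rel H \<psi>" unfolding reid_rel_def using x y g
        by (auto intro!: bexI[of _ "inv\<^bsub>H\<^esub> g"])
    qed
    show "trans (reid_rel H \<psi>)"
    proof (rule transI)
      fix x y z assume "(x, y) \<in> reid_rel H \<psi>" "(y, z) \<in> reid_rel H \<psi>"
      then obtain g h where x: "x \<in> carrier H" and y: "y \<in> carrier H" and g: "g \<in> carrier H"
        and e: "y = g \<otimes>\<^bsub>H\<^esub> x \<otimes>\<^bsub>H\<^esub> inv\<^bsub>H\<^esub> (\<psi> g)" and z: "z \<in> carrier H"
        and h: "h \<in> carrier H" and e2: "z = h \<otimes>\<^bsub>H\<^esub> y \<otimes>\<^bsub>H\<^esub> inv\<^bsub>H\<^esub> (\<psi> h)"
        unfolding reid_rel_def by auto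
      have "z = (h \<otimes>\<^bsub>H\<^esub> g) \<otimes>\<^bsub>H\<^esub> x \<otimes>\<^bsub>H\<^esub> inv\<^bsub>H\<^esub> (\<psi> (h \<otimes>\<^bsub>H\<^esub> g))"
        using x g h by (simp add: e2 e H.m_assoc H.inv_mult_group)
      then show "(x, z) \<in> reid_rel H \<psi>" unfolding reid_rel_def using x z g h
        by (auto intro!: bexI[of _ "h \<otimes>\<^bsub>H\<^esub> g"])
    qed
  qed
qed

lemma reid_cong:
  assumes "\<And>x. x \<in> carrier H \<Longrightarrow> \<psi> x = \<psi>' x"
  shows "reidemeister H \<psi> = reidemeister H \<psi>'"
proof -
  have "reid_rel H \<psi> = reid_rel H \<psi>'" unfolding reid_rel_def using assms by auto
  then show ?thesis unfolding reidemeister_def by simp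
qed

lemma quot_bij:
  assumes A: "equiv A r" and B: "equiv B s" and e: "\<And>b. b \<in> B \<Longrightarrow> e b \<in> A"
    and surj: "\<And>a. a \<in> A \<Longrightarrow> \<exists>b\<in>B. (a, e b) \<in> r"
    and refl: "\<And>b b'. b \<in> B \<Longrightarrow> b' \<in> B \<Longrightarrow> (b, b') \<in> s \<longleftrightarrow> (e b, e b') \<in> r"
  shows "bij_betw (\<lambda>Y. r `` (e ` Y)) (B // s) (A // r)"
proof -
  have key: "r `` (e ` (s `` {b})) = r `` {e b}" if "b \<in> B" for b
  proof
    show "r `` (e ` (s `` {b})) \<subseteq> r `` {e b}"
    proof
      fix a assume "a \<in> r `` (e ` (s `` {b}))"
      then obtain b' where "(b, b') \<in> s" "(e b', a) \<in> r" by auto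
      moreover have "b' \<in> B" using \<open>(b, b') \<in> s\<close> B by (meson equiv_class_eq_iff)
      ultimately have "(e b, e b') \<in> r" using refl that by blast
      then show "a \<in> r `` {e b}" using \<open>(e b', a) \<in> r\<close> A by (meson ImageI equiv_def insertI1 transD)
    qed
    show "r `` {e b} \<subseteq> r `` (e ` (s `` {b}))"
      using that B by (auto dest: equiv_class_self)
  qed
  show ?thesis
  proof (rule bij_betw_imageI)
    show "inj_on (\<lambda>Y. r `` (e ` Y)) (B // s)"
    proof (rule inj_onI)
      fix U V assume "U \<in> B // s" "V \<in> B // s" "r `` (e ` U) = r `` (e ` V)"
      then obtain b b' where bb: "b \<in> B" "b' \<in> B" "U = s `` {b}" "V = s `` {b'}"
        and "r `` {e b} = r `` {e b'}" by (auto elim!: quotientE simp: key)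
      then have "(e b, e b') \<in> r" using A e by (meson eq_equiv_class_iff)
      then have "(b, b') \<in> s" using refl bb by blast
      then show "U = V" using bb B by (simp add: equiv_class_eq)
    qed
    show "(\<lambda>Y. r `` (e ` Y)) ` (B // s) = A // r"
    proof
      show "(\<lambda>Y. r `` (e ` Y)) ` (B // s) \<subseteq> A // r"
        using e by (auto elim!: quotientE simp: key intro!: quotientI)
      show "A // r \<subseteq> (\<lambda>Y. r `` (e ` Y)) ` (B // s)"
      proof
        fix U assume "U \<in> A // r"
        then obtain a where a: "a \<in> A" "U = r `` {a}" by (auto elim: quotientE)
        then obtain b where b: "b \<in> B" "(a, e b) \<in> r" using surj by blast
        then have "U = r `` {e b}" using a A by (simp add: equiv_class_eq)
        then show "U \<in> (\<lambda>Y. r `` (e ` Y)) ` (B // s)"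
          using b key by (auto intro!: image_eqI[of _ _ "s `` {b}"] quotientI)
      qed
    qed
  qed
qed

definition prodrel :: "('a \<times> 'a) set \<Rightarrow> ('c \<times> 'c) set \<Rightarrow> (('a \<times> 'c) \<times> ('a \<times> 'c)) set" where
  "prodrel r s = {((a, b), (a', b')). (a, a') \<in> r \<and> (b, b') \<in> s}"

lemma prodrel_equiv:
  assumes "equiv A r" "equiv B s" shows "equiv (A \<times> B) (prodrel r s)"
proof (rule equivI)
  show "prodrel r s \<subseteq> (A \<times> B) \<times> (A \<times> B)"
    using assms unfolding prodrel_def equiv_def refl_on_def by blast
  show "refl_on (A \<times> B) (prodrel r s)"
    using assms unfolding prodrel_def equiv_def refl_on_def by blast
  show "sym (prodrel r s)"
    using assms unfolding prodrel_def equiv_def by (auto intro!: symI dest: symD)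
  show "trans (prodrel r s)"
  proof (rule transI)
    fix x y z assume "(x, y) \<in> prodrel r s" "(y, z) \<in> prodrel r s"
    then show "(x, z) \<in> prodrel r s"
      using assms unfolding prodrel_def equiv_def
      by (cases x; cases y; cases z) (auto dest: transD)
  qed
qed

lemma prodrel_class:
  assumes "equiv A r" "equiv B s" "a \<in> A" "b \<in> B"
  shows "prodrel r s `` {(a, b)} = r `` {a} \<times> s `` {b}"
  unfolding prodrel_def by auto

lemma prodrel_bij:
  assumes A: "equiv A r" and B: "equiv B s"
  shows "bij_betw (\<lambda>(U, V). U \<times> V) (A // r \<times> B // s) ((A \<times> B) // prodrel r s)"
proof (rule bij_betw_imageI)
  show "inj_on (\<lambda>(U, V). U \<times> V) (A // r \<times> B // s)"
  proof (rule inj_onI, clarify)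
    fix U V U' V' assume "U \<in> A // r" "V \<in> B // s" "U' \<in> A // r" "V' \<in> B // s" "U \<times> V = U' \<times> V'"
    moreover have "U \<noteq> {}" "V \<noteq> {}" "U' \<noteq> {}" "V' \<noteq> {}"
      using calculation A B by (auto simp: in_quotient_imp_non_empty)
    ultimately show "U = U' \<and> V = V'" by (simp add: times_eq_iff)
  qed
  show "(\<lambda>(U, V). U \<times> V) ` (A // r \<times> B // s) = (A \<times> B) // prodrel r s"
  proof
    show "(\<lambda>(U, V). U \<times> V) ` (A // r \<times> B // s) \<subseteq> (A \<times> B) // prodrel r s"
      using A B by (auto elim!: quotientE simp: prodrel_class[symmetric] intro!: quotientI)
    show "(A \<times> B) // prodrel r s \<subseteq> (\<lambda>(U, V). U \<times> V) ` (A // r \<times> B // s)"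
    proof
      fix U assume "U \<in> (A \<times> B) // prodrel r s"
      then obtain a b where "a \<in> A" "b \<in> B" "U = prodrel r s `` {(a, b)}" by (auto elim!: quotientE)
      then show "U \<in> (\<lambda>(U, V). U \<times> V) ` (A // r \<times> B // s)"
        using A B by (auto simp: prodrel_class intro!: image_eqI[of _ _ "(r `` {a}, s `` {b})"] quotientI)
    qed
  qed
qed

lemma reid_nonempty:
  assumes "group H" "\<psi> \<in> hom H H" shows "carrier H // reid_rel H \<psi> \<noteq> {}"
  using assms group.is_monoid monoid.one_closed by (fastforce simp: quotient_def)

lemma reid_bij_eq:
  assumes "bij_betw f (carrier H // reid_rel H \<psi>) (carrier H' // reid_rel H' \<psi>')"
  shows "reidemeister H \<psi> = reidemeister H' \<psi>'"
  using assms unfolding reidemeister_def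
  by (simp add: bij_betw_finite bij_betw_same_card)

lemma reid_prod_eq:
  assumes H: "group H" "\<psi> \<in> hom H H" and K: "group K" "\<chi> \<in> hom K K"
    and bij: "bij_betw f ((carrier H \<times> carrier K) // prodrel (reid_rel H \<psi>) (reid_rel K \<chi>)) (carrier L // reid_rel L \<theta>)"
  shows "reidemeister L \<theta> = reidemeister H \<psi> * reidemeister K \<chi>"
proof -
  let ?A = "carrier H // reid_rel H \<psi>" and ?B = "carrier K // reid_rel K \<chi>"
  have b: "bij_betw (f \<circ> (\<lambda>(U, V). U \<times> V)) (?A \<times> ?B) (carrier L // reid_rel L \<theta>)"
    using bij_betw_trans[OF prodrel_bij[OF reid_equiv[OF H] reid_equiv[OF K]] bij] .
  have ne: "?A \<noteq> {}" "?B \<noteq> {}" using reid_nonempty H K by auto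
  show ?thesis
  proof (cases "finite ?A \<and> finite ?B")
    case True
    then have "finite (carrier L // reid_rel L \<theta>)" "card (carrier L // reid_rel L \<theta>) = card ?A * card ?B"
      using b bij_betw_finite bij_betw_same_card card_cartesian_product by (metis finite_cartesian_product)+
    then show ?thesis using True unfolding reidemeister_def by simp
  next
    case False
    then have "\<not> finite (carrier L // reid_rel L \<theta>)"
      using b bij_betw_finite ne by (metis finite_cartesian_product_iff)
    have n0: "reidemeister H \<psi> \<noteq> 0" "reidemeister K \<chi> \<noteq> 0"
      using ne unfolding reidemeister_def by (auto simp: zero_enat_def)
    have "reidemeister H \<psi> = \<infinity> \<or> reidemeister K \<chi> = \<infinity>"
      using False unfolding reidemeister_def by auto
    then have "reidemeister H \<psi> * reidemeister K \<chi> = \<infinity>"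
      using n0 imult_is_infinity by blast
    then show ?thesis using \<open>\<not> finite (carrier L // reid_rel L \<theta>)\<close> unfolding reidemeister_def by simp
  qed
qed

definition W :: "nat set \<Rightarrow> (nat \<Rightarrow> nat) \<Rightarrow> (nat \<Rightarrow> 'a \<Rightarrow> 'a) \<Rightarrow> (nat \<Rightarrow> 'a) \<Rightarrow> (nat \<Rightarrow> 'a)" where
  "W I \<sigma> \<phi> = (\<lambda>x. \<lambda>i\<in>I. \<phi> i (x (\<sigma> i)))"

abbreviation PG :: "('a, 'b) monoid_scheme \<Rightarrow> nat set \<Rightarrow> (nat \<Rightarrow> 'a) monoid" where
  "PG G I \<equiv> product_group I (\<lambda>_. G)"

lemma W_carrier:
  assumes "\<sigma> permutes I" "\<forall>i\<in>I. \<phi> i \<in> hom G G" "x \<in> carrier (PG G I)"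
  shows "W I \<sigma> \<phi> x \<in> carrier (PG G I)"
  using assms permutes_in_image[OF assms(1)] by (auto simp: W_def PiE_iff hom_def Pi_iff)

lemma W_hom:
  assumes G: "group G" and "\<sigma> permutes I" "\<forall>i\<in>I. \<phi> i \<in> hom G G"
  shows "W I \<sigma> \<phi> \<in> hom (PG G I) (PG G I)"
proof (rule homI)
  show "W I \<sigma> \<phi> x \<in> carrier (PG G I)" if "x \<in> carrier (PG G I)" for x using W_carrier assms that by blast
  fix x y assume "x \<in> carrier (PG G I)" "y \<in> carrier (PG G I)"
  then show "W I \<sigma> \<phi> (x \<otimes>\<^bsub>PG G I\<^esub> y) = W I \<sigma> \<phi> x \<otimes>\<^bsub>PG G I\<^esub> W I \<sigma> \<phi> y"
    unfolding mult_product_group W_def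
  proof (intro restrict_ext)
    fix i assume i: "i \<in> I"
    then have si: "\<sigma> i \<in> I" using permutes_in_image[OF assms(2)] by simp
    have "x (\<sigma> i) \<in> carrier G" "y (\<sigma> i) \<in> carrier G"
      using \<open>x \<in> carrier (PG G I)\<close> \<open>y \<in> carrier (PG G I)\<close> si by auto
    then show "\<phi> i ((\<lambda>i\<in>I. x i \<otimes>\<^bsub>G\<^esub> y i) (\<sigma> i)) =
      (\<lambda>i\<in>I. \<phi> i (x (\<sigma> i))) i \<otimes>\<^bsub>G\<^esub> (\<lambda>i\<in>I. \<phi> i (y (\<sigma> i))) i"
      using i si assms(3) by (simp add: hom_mult)
  qed
qed

lemma reid_W:
  assumes G: "group G" and s: "\<sigma> permutes I" and h: "\<forall>i\<in>I. \<phi> i \<in> hom G G"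
  shows "(x, y) \<in> reid_rel (PG G I) (W I \<sigma> \<phi>) \<longleftrightarrow> x \<in> carrier (PG G I) \<and> y \<in> carrier (PG G I) \<and>
     (\<exists>g\<in>carrier (PG G I). \<forall>i\<in>I. y i = g i \<otimes>\<^bsub>G\<^esub> x i \<otimes>\<^bsub>G\<^esub> inv\<^bsub>G\<^esub> (\<phi> i (g (\<sigma> i))))"
proof -
  have *: "g \<otimes>\<^bsub>PG G I\<^esub> x \<otimes>\<^bsub>PG G I\<^esub> inv\<^bsub>PG G I\<^esub> (W I \<sigma> \<phi> g)
      = (\<lambda>i\<in>I. g i \<otimes>\<^bsub>G\<^esub> x i \<otimes>\<^bsub>G\<^esub> inv\<^bsub>G\<^esub> (\<phi> i (g (\<sigma> i))))"
    if "g \<in> carrier (PG G I)" for g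
  proof -
    have inv: "inv\<^bsub>PG G I\<^esub> (W I \<sigma> \<phi> g) = (\<lambda>i\<in>I. inv\<^bsub>G\<^esub> (W I \<sigma> \<phi> g i))"
      using W_carrier[OF s h that] G by (intro inv_product_group) auto
    show ?thesis unfolding inv mult_product_group
      by (rule restrict_ext) (simp add: W_def)
  qed
  show ?thesis
  proof
    assume "(x, y) \<in> reid_rel (PG G I) (W I \<sigma> \<phi>)"
    then obtain g where x: "x \<in> carrier (PG G I)" and y: "y \<in> carrier (PG G I)" and g: "g \<in> carrier (PG G I)"
      and e: "y = g \<otimes>\<^bsub>PG G I\<^esub> x \<otimes>\<^bsub>PG G I\<^esub> inv\<^bsub>PG G I\<^esub> (W I \<sigma> \<phi> g)"
      unfolding reid_rel_def by blast
    have "\<forall>i\<in>I. y i = g i \<otimes>\<^bsub>G\<^esub> x i \<otimes>\<^bsub>G\<^esub> inv\<^bsub>G\<^esub> (\<phi> i (g (\<sigma> i)))"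
      using e *[OF g] by simp
    then show "x \<in> carrier (PG G I) \<and> y \<in> carrier (PG G I) \<and>
     (\<exists>g\<in>carrier (PG G I). \<forall>i\<in>I. y i = g i \<otimes>\<^bsub>G\<^esub> x i \<otimes>\<^bsub>G\<^esub> inv\<^bsub>G\<^esub> (\<phi> i (g (\<sigma> i))))"
      using x y g by blast
  next
    assume "x \<in> carrier (PG G I) \<and> y \<in> carrier (PG G I) \<and>
     (\<exists>g\<in>carrier (PG G I). \<forall>i\<in>I. y i = g i \<otimes>\<^bsub>G\<^esub> x i \<otimes>\<^bsub>G\<^esub> inv\<^bsub>G\<^esub> (\<phi> i (g (\<sigma> i))))"
    then obtain g where x: "x \<in> carrier (PG G I)" and y: "y \<in> carrier (PG G I)" and g: "g \<in> carrier (PG G I)"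
      and e: "\<forall>i\<in>I. y i = g i \<otimes>\<^bsub>G\<^esub> x i \<otimes>\<^bsub>G\<^esub> inv\<^bsub>G\<^esub> (\<phi> i (g (\<sigma> i)))" by blast
    have "y = (\<lambda>i\<in>I. g i \<otimes>\<^bsub>G\<^esub> x i \<otimes>\<^bsub>G\<^esub> inv\<^bsub>G\<^esub> (\<phi> i (g (\<sigma> i))))"
      using y e by (auto simp: PiE_iff extensional_def)
    then have "y = g \<otimes>\<^bsub>PG G I\<^esub> x \<otimes>\<^bsub>PG G I\<^esub> inv\<^bsub>PG G I\<^esub> (W I \<sigma> \<phi> g)" using *[OF g] by simp
    then show "(x, y) \<in> reid_rel (PG G I) (W I \<sigma> \<phi>)" unfolding reid_rel_def using x y g by blast
  qed
qed

lemma hom_inv': "group G \<Longrightarrow> f \<in> hom G G \<Longrightarrow> x \<in> carrier G \<Longrightarrow> f (inv\<^bsub>G\<^esub> x) = inv\<^bsub>G\<^esub> (f x)"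
  by (simp add: group_hom.hom_inv group_hom_axioms_def group_hom_def)

lemma hom_one': "group G \<Longrightarrow> f \<in> hom G G \<Longrightarrow> f \<one>\<^bsub>G\<^esub> = \<one>\<^bsub>G\<^esub>"
  by (simp add: group_hom.hom_one group_hom_axioms_def group_hom_def)

lemma hom_closed': "f \<in> hom G G \<Longrightarrow> x \<in> carrier G \<Longrightarrow> f x \<in> carrier G"
  by (auto simp: hom_def)

lemma reid_fix:
  assumes G: "group G" and k: "k \<notin> F" and s: "\<sigma> permutes insert k F" and sk: "\<sigma> k = k"
    and h: "\<forall>i\<in>insert k F. \<phi> i \<in> hom G G"
  shows "reidemeister (PG G (insert k F)) (W (insert k F) \<sigma> \<phi>)
         = reidemeister G (\<phi> k) * reidemeister (PG G F) (W F \<sigma> \<phi>)"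
proof -
  interpret G: group G by fact
  let ?I = "insert k F"
  have sF: "\<sigma> permutes F" using permutes_superset[OF s] sk by auto
  have sI: "\<And>i. i \<in> ?I \<Longrightarrow> \<sigma> i \<in> ?I" using permutes_in_image[OF s] by simp
  have sFF: "\<And>i. i \<in> F \<Longrightarrow> \<sigma> i \<in> F" using permutes_in_image[OF sF] by simp
  have hF: "\<forall>i\<in>F. \<phi> i \<in> hom G G" using h by simp
  have grF: "group (PG G F)" "group (PG G ?I)" using G by auto
  define e where "e = (\<lambda>(a::'a, z::nat \<Rightarrow> 'a). z(k := a))"
  let ?r = "reid_rel (PG G ?I) (W ?I \<sigma> \<phi>)"
  let ?s = "prodrel (reid_rel G (\<phi> k)) (reid_rel (PG G F) (W F \<sigma> \<phi>))"
  have eqA: "equiv (carrier (PG G ?I)) ?r" by (rule reid_equiv[OF grF(2) W_hom[OF G s h]])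
  have eqB: "equiv (carrier G \<times> carrier (PG G F)) ?s"
    by (rule prodrel_equiv[OF reid_equiv[OF G] reid_equiv[OF grF(1) W_hom[OF G sF hF]]]) (use h in simp)
  have eC: "e b \<in> carrier (PG G ?I)" if "b \<in> carrier G \<times> carrier (PG G F)" for b
    using that k by (auto simp: e_def PiE_iff extensional_def)
  have bij: "bij_betw (\<lambda>Y. ?r `` (e ` Y)) ((carrier G \<times> carrier (PG G F)) // ?s) (carrier (PG G ?I) // ?r)"
  proof (rule quot_bij[OF eqA eqB eC])
    fix x assume x: "x \<in> carrier (PG G ?I)"
    have "e (x k, restrict x F) = x" using x k by (auto simp: e_def PiE_iff extensional_def)
    moreover have "(x k, restrict x F) \<in> carrier G \<times> carrier (PG G F)" using x by auto
    ultimately show "\<exists>b\<in>carrier G \<times> carrier (PG G F). (x, e b) \<in> ?r"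
      using eqA x by (metis equiv_class_eq_iff)
  next
    fix b b' assume b: "b \<in> carrier G \<times> carrier (PG G F)" and b': "b' \<in> carrier G \<times> carrier (PG G F)"
    obtain a z where bz: "b = (a, z)" by force
    obtain a' z' where bz': "b' = (a', z')" by force
    have a: "a \<in> carrier G" "z \<in> carrier (PG G F)" using b bz by auto
    have a': "a' \<in> carrier G" "z' \<in> carrier (PG G F)" using b' bz' by auto
    have ez: "e b = z(k := a)" "e b' = z'(k := a')" using bz bz' by (auto simp: e_def)
    show "(b, b') \<in> ?s \<longleftrightarrow> (e b, e b') \<in> ?r"
    proof
      assume "(b, b') \<in> ?s"
      then have r1: "(a, a') \<in> reid_rel G (\<phi> k)" and r2: "(z, z') \<in> reid_rel (PG G F) (W F \<sigma> \<phi>)"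
        using bz bz' by (auto simp: prodrel_def)
      obtain g0 where g0: "g0 \<in> carrier G" "a' = g0 \<otimes>\<^bsub>G\<^esub> a \<otimes>\<^bsub>G\<^esub> inv\<^bsub>G\<^esub> (\<phi> k g0)"
        using r1 unfolding reid_rel_def by auto
      obtain hh where hh: "hh \<in> carrier (PG G F)" "\<forall>i\<in>F. z' i = hh i \<otimes>\<^bsub>G\<^esub> z i \<otimes>\<^bsub>G\<^esub> inv\<^bsub>G\<^esub> (\<phi> i (hh (\<sigma> i)))"
        using r2 reid_W[OF G sF hF] by blast
      define g where "g = hh(k := g0)"
      have gC: "g \<in> carrier (PG G ?I)" using hh g0 k by (auto simp: g_def PiE_iff extensional_def)
      have "\<forall>i\<in>?I. (e b') i = g i \<otimes>\<^bsub>G\<^esub> (e b) i \<otimes>\<^bsub>G\<^esub> inv\<^bsub>G\<^esub> (\<phi> i (g (\<sigma> i)))"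
      proof
        fix i assume i: "i \<in> ?I"
        show "(e b') i = g i \<otimes>\<^bsub>G\<^esub> (e b) i \<otimes>\<^bsub>G\<^esub> inv\<^bsub>G\<^esub> (\<phi> i (g (\<sigma> i)))"
        proof (cases "i = k")
          case True then show ?thesis using g0 sk by (simp add: ez g_def)
        next
          case False
          then have "i \<in> F" "\<sigma> i \<in> F" using i sFF by auto
          moreover have "\<sigma> i \<noteq> k" using \<open>\<sigma> i \<in> F\<close> k by auto
          ultimately show ?thesis using hh False by (simp add: ez g_def)
        qed
      qed
      then show "(e b, e b') \<in> ?r" using reid_W[OF G s h] gC eC b b' by blast
    next
      assume "(e b, e b') \<in> ?r"
      then obtain g where gC: "g \<in> carrier (PG G ?I)"
        and ge: "\<forall>i\<in>?I. (e b') i = g i \<otimes>\<^bsub>G\<^esub> (e b) i \<otimes>\<^bsub>G\<^esub> inv\<^bsub>G\<^esub> (\<phi> i (g (\<sigma> i)))"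
        using reid_W[OF G s h] by blast
      have aa: "(a, a') \<in> reid_rel G (\<phi> k)"
        using ge gC a a' sk unfolding reid_rel_def by (auto simp: ez intro!: bexI[of _ "g k"])
      have "restrict g F \<in> carrier (PG G F)" using gC by auto
      moreover have "\<forall>i\<in>F. z' i = restrict g F i \<otimes>\<^bsub>G\<^esub> z i \<otimes>\<^bsub>G\<^esub> inv\<^bsub>G\<^esub> (\<phi> i (restrict g F (\<sigma> i)))"
      proof
        fix i assume i: "i \<in> F"
        then have "i \<noteq> k" "\<sigma> i \<in> F" using k sFF by auto
        then show "z' i = restrict g F i \<otimes>\<^bsub>G\<^esub> z i \<otimes>\<^bsub>G\<^esub> inv\<^bsub>G\<^esub> (\<phi> i (restrict g F (\<sigma> i)))"
        proof -
          have "(e b') i = g i \<otimes>\<^bsub>G\<^esub> (e b) i \<otimes>\<^bsub>G\<^esub> inv\<^bsub>G\<^esub> (\<phi> i (g (\<sigma> i)))"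
            using ge i by blast
          then show ?thesis using \<open>i \<noteq> k\<close> \<open>\<sigma> i \<in> F\<close> i by (simp add: ez)
        qed
      qed
      ultimately have "(z, z') \<in> reid_rel (PG G F) (W F \<sigma> \<phi>)"
        using reid_W[OF G sF hF] a a' by blast
      with aa show "(b, b') \<in> ?s" using bz bz' by (auto simp: prodrel_def)
    qed
  qed
  show ?thesis by (rule reid_prod_eq[OF G _ grF(1) W_hom[OF G sF hF] bij]) (use h in simp)
qed

lemma reid_move:
  assumes G: "group G" and k: "k \<notin> F" and s: "\<sigma> permutes insert k F" and sk: "\<sigma> k \<noteq> k"
    and j: "j \<in> F" and sj: "\<sigma> j = k"
    and h: "\<forall>i\<in>insert k F. \<phi> i \<in> hom G G"
  shows "(\<sigma> \<circ> Transposition.transpose j k) permutes F"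
    and "\<forall>i\<in>F. (\<phi>(j := compose (carrier G) (\<phi> j) (\<phi> k))) i \<in> hom G G"
    and "reidemeister (PG G (insert k F)) (W (insert k F) \<sigma> \<phi>)
         = reidemeister (PG G F) (W F (\<sigma> \<circ> Transposition.transpose j k) (\<phi>(j := compose (carrier G) (\<phi> j) (\<phi> k))))"
proof -
  interpret G: group G by fact
  let ?I = "insert k F"
  let ?s' = "\<sigma> \<circ> Transposition.transpose j k"
  let ?p' = "\<phi>(j := compose (carrier G) (\<phi> j) (\<phi> k))"
  have jk: "j \<noteq> k" using j k by auto
  have sI: "\<And>i. i \<in> ?I \<Longrightarrow> \<sigma> i \<in> ?I" using permutes_in_image[OF s] by simp
  have skF: "\<sigma> k \<in> F" using sI[of k] sk by auto
  have sinj: "\<And>a b. \<sigma> a = \<sigma> b \<Longrightarrow> a = b" using permutes_inj[OF s] by (auto dest: injD)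
  have s'I: "?s' permutes ?I" using permutes_compose[OF permutes_swap_id s] j by auto
  show sF: "?s' permutes F"
    by (rule permutes_superset[OF s'I]) (use sj jk in \<open>auto simp: Transposition.transpose_def\<close>)
  have s'v: "\<And>i. i \<in> F \<Longrightarrow> ?s' i = (if i = j then \<sigma> k else \<sigma> i)"
    using k by (auto simp: Transposition.transpose_def)
  have sFF: "\<And>i. i \<in> F \<Longrightarrow> i \<noteq> j \<Longrightarrow> \<sigma> i \<in> F"
    using sI sinj sj by (metis insertE insertI2 k)
  have hk: "\<phi> k \<in> hom G G" "\<phi> j \<in> hom G G" using h j by auto
  show hF: "\<forall>i\<in>F. ?p' i \<in> hom G G"
  proof
    fix i assume "i \<in> F"
    show "?p' i \<in> hom G G"
    proof (cases "i = j")
      case True then show ?thesis using G.hom_compose[OF hk] by simp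
    next
      case False then show ?thesis using h \<open>i \<in> F\<close> by simp
    qed
  qed
  have grF: "group (PG G F)" "group (PG G ?I)" using G by auto
  define e where "e = (\<lambda>z::nat \<Rightarrow> 'a. z(k := \<one>\<^bsub>G\<^esub>))"
  let ?r = "reid_rel (PG G ?I) (W ?I \<sigma> \<phi>)"
  let ?s = "reid_rel (PG G F) (W F ?s' ?p')"
  have eqA: "equiv (carrier (PG G ?I)) ?r" by (rule reid_equiv[OF grF(2) W_hom[OF G s h]])
  have eqB: "equiv (carrier (PG G F)) ?s" by (rule reid_equiv[OF grF(1) W_hom[OF G sF hF]])
  have eC: "e b \<in> carrier (PG G ?I)" if "b \<in> carrier (PG G F)" for b
    using that k by (auto simp: e_def PiE_iff extensional_def)
  have bij: "bij_betw (\<lambda>Y. ?r `` (e ` Y)) (carrier (PG G F) // ?s) (carrier (PG G ?I) // ?r)"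
  proof (rule quot_bij[OF eqA eqB eC])
    fix x assume x: "x \<in> carrier (PG G ?I)"
    have xc: "\<And>i. i \<in> ?I \<Longrightarrow> x i \<in> carrier G" using x by auto
    define b where "b = (\<lambda>i\<in>F. if i = j then x j \<otimes>\<^bsub>G\<^esub> \<phi> j (x k) else x i)"
    have bC: "b \<in> carrier (PG G F)"
      using xc hk j by (auto simp: b_def hom_closed')
    define g where "g = (\<lambda>i\<in>?I. if i = k then inv\<^bsub>G\<^esub> (x k) else \<one>\<^bsub>G\<^esub>)"
    have gC: "g \<in> carrier (PG G ?I)" using xc by (auto simp: g_def)
    have "\<forall>i\<in>?I. (e b) i = g i \<otimes>\<^bsub>G\<^esub> x i \<otimes>\<^bsub>G\<^esub> inv\<^bsub>G\<^esub> (\<phi> i (g (\<sigma> i)))"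
    proof
      fix i assume i: "i \<in> ?I"
      have hi: "\<phi> i \<in> hom G G" using h i by auto
      show "(e b) i = g i \<otimes>\<^bsub>G\<^esub> x i \<otimes>\<^bsub>G\<^esub> inv\<^bsub>G\<^esub> (\<phi> i (g (\<sigma> i)))"
      proof (cases "i = k")
        case True
        then show ?thesis using xc[of k] sk skF hom_one'[OF G hi] by (simp add: e_def g_def)
      next
        case False
        note F = this
        show ?thesis
        proof (cases "i = j")
          case True
          then show ?thesis using xc[of k] xc[of j] j jk sj hom_inv'[OF G hk(2)] hk
            by (simp add: e_def g_def b_def hom_closed')
        next
          case False
          then have "\<sigma> i \<noteq> k" "\<sigma> i \<in> ?I" using sj sinj sI i by auto
          then show ?thesis using F False i xc[of i] hom_one'[OF G hi] by (simp add: e_def g_def b_def)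
        qed
      qed
    qed
    then have "(x, e b) \<in> ?r" using reid_W[OF G s h] gC x eC[OF bC] by blast
    then show "\<exists>b\<in>carrier (PG G F). (x, e b) \<in> ?r" using bC by blast
  next
    fix b b' assume b: "b \<in> carrier (PG G F)" and b': "b' \<in> carrier (PG G F)"
    have bc: "\<And>i. i \<in> F \<Longrightarrow> b i \<in> carrier G" "\<And>i. i \<in> F \<Longrightarrow> b' i \<in> carrier G" using b b' by auto
    show "(b, b') \<in> ?s \<longleftrightarrow> (e b, e b') \<in> ?r"
    proof
      assume "(b, b') \<in> ?s"
      then obtain hh where hh: "hh \<in> carrier (PG G F)"
        and he: "\<forall>i\<in>F. b' i = hh i \<otimes>\<^bsub>G\<^esub> b i \<otimes>\<^bsub>G\<^esub> inv\<^bsub>G\<^esub> (?p' i (hh (?s' i)))"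
        using reid_W[OF G sF hF] by blast
      have hc: "\<And>i. i \<in> F \<Longrightarrow> hh i \<in> carrier G" using hh by auto
      define g where "g = hh(k := \<phi> k (hh (\<sigma> k)))"
      have gC: "g \<in> carrier (PG G ?I)" using hh hc[OF skF] hk k
        by (auto simp: g_def PiE_iff extensional_def hom_closed')
      have "\<forall>i\<in>?I. (e b') i = g i \<otimes>\<^bsub>G\<^esub> (e b) i \<otimes>\<^bsub>G\<^esub> inv\<^bsub>G\<^esub> (\<phi> i (g (\<sigma> i)))"
      proof
        fix i assume i: "i \<in> ?I"
        show "(e b') i = g i \<otimes>\<^bsub>G\<^esub> (e b) i \<otimes>\<^bsub>G\<^esub> inv\<^bsub>G\<^esub> (\<phi> i (g (\<sigma> i)))"
        proof (cases "i = k")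
          case True
          have "\<phi> k (hh (\<sigma> k)) \<in> carrier G" using hc[OF skF] hk by (simp add: hom_closed')
          then show ?thesis using True sk skF k by (simp add: e_def g_def)
        next
          case F: False
          then have iF: "i \<in> F" using i by auto
          show ?thesis
          proof (cases "i = j")
            case True
            have "b' j = hh j \<otimes>\<^bsub>G\<^esub> b j \<otimes>\<^bsub>G\<^esub> inv\<^bsub>G\<^esub> (?p' j (hh (?s' j)))" using he j by blast
            moreover have "?p' j (hh (?s' j)) = \<phi> j (\<phi> k (hh (\<sigma> k)))"
              using s'v[OF j] hc[OF skF] by (simp add: compose_eq)
            ultimately show ?thesis using True jk sj k j by (simp add: e_def g_def)
          next
            case False
            then have "\<sigma> i \<in> F" "\<sigma> i \<noteq> k" using sFF iF k by auto
            moreover have "b' i = hh i \<otimes>\<^bsub>G\<^esub> b i \<otimes>\<^bsub>G\<^esub> inv\<^bsub>G\<^esub> (?p' i (hh (?s' i)))" using he iF by blast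
            ultimately show ?thesis using False F iF s'v[OF iF] by (simp add: e_def g_def)
          qed
        qed
      qed
      then show "(e b, e b') \<in> ?r" using reid_W[OF G s h] gC eC b b' by blast
    next
      assume "(e b, e b') \<in> ?r"
      then obtain g where gC: "g \<in> carrier (PG G ?I)"
        and ge: "\<forall>i\<in>?I. (e b') i = g i \<otimes>\<^bsub>G\<^esub> (e b) i \<otimes>\<^bsub>G\<^esub> inv\<^bsub>G\<^esub> (\<phi> i (g (\<sigma> i)))"
        using reid_W[OF G s h] by blast
      have gc: "\<And>i. i \<in> ?I \<Longrightarrow> g i \<in> carrier G" using gC by auto
      have "\<one>\<^bsub>G\<^esub> = g k \<otimes>\<^bsub>G\<^esub> \<one>\<^bsub>G\<^esub> \<otimes>\<^bsub>G\<^esub> inv\<^bsub>G\<^esub> (\<phi> k (g (\<sigma> k)))"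
        using ge by (auto simp: e_def)
      then have gk: "g k = \<phi> k (g (\<sigma> k))"
        using gc[of k] gc[of "\<sigma> k"] skF hk by (simp add: hom_closed' G.inv_equality G.r_one)
          (metis G.inv_closed G.inv_inv G.inv_equality G.r_inv hom_closed' G.inv_comm)
      have "restrict g F \<in> carrier (PG G F)" using gC by auto
      moreover have "\<forall>i\<in>F. b' i = restrict g F i \<otimes>\<^bsub>G\<^esub> b i \<otimes>\<^bsub>G\<^esub> inv\<^bsub>G\<^esub> (?p' i (restrict g F (?s' i)))"
      proof
        fix i assume iF: "i \<in> F"
        have ik: "i \<noteq> k" using iF k by auto
        have eq: "(e b') i = g i \<otimes>\<^bsub>G\<^esub> (e b) i \<otimes>\<^bsub>G\<^esub> inv\<^bsub>G\<^esub> (\<phi> i (g (\<sigma> i)))" using ge iF by blast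
        show "b' i = restrict g F i \<otimes>\<^bsub>G\<^esub> b i \<otimes>\<^bsub>G\<^esub> inv\<^bsub>G\<^esub> (?p' i (restrict g F (?s' i)))"
        proof (cases "i = j")
          case True
          have "?p' j (restrict g F (?s' j)) = \<phi> j (\<phi> k (g (\<sigma> k)))"
            using s'v[OF j] gc[of "\<sigma> k"] skF by (simp add: compose_eq)
          then show ?thesis using eq True ik sj gk j by (simp add: e_def)
        next
          case False
          then have "\<sigma> i \<in> F" using sFF iF by auto
          then show ?thesis using eq False ik iF s'v[OF iF] by (simp add: e_def)
        qed
      qed
      ultimately show "(b, b') \<in> ?s" using reid_W[OF G sF hF] b b' by blast
    qed
  qed
  show "reidemeister (PG G ?I) (W ?I \<sigma> \<phi>) = reidemeister (PG G F) (W F ?s' ?p')"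
    using reid_bij_eq[OF bij] by simp
qed



lemma auto_hom: "f \<in> auto G \<Longrightarrow> f \<in> hom G G" by (simp add: auto_def)

lemma auto_compose: "group G \<Longrightarrow> f \<in> auto G \<Longrightarrow> g \<in> auto G \<Longrightarrow> compose (carrier G) f g \<in> auto G"
  using group.hom_compose[of G g G f G] by (simp add: auto_def compose_Bij)

lemma reid_empty:
  assumes "group G" "\<psi> \<in> hom (PG G {}) (PG G {})"
  shows "reidemeister (PG G {}) \<psi> = 1"
proof -
  have "carrier (PG G {}) // reid_rel (PG G {}) \<psi> = {reid_rel (PG G {}) \<psi> `` {\<lambda>x. undefined}}"
    by (simp add: quotient_def)
  then show ?thesis unfolding reidemeister_def by (simp add: one_enat_def)
qed

lemma W_cong_reid:
  assumes s: "\<sigma> permutes I" and ss: "\<forall>i\<in>I. \<sigma> i = \<sigma>' i"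
    and pp: "\<forall>i\<in>I. \<forall>y\<in>carrier G. \<phi> i y = \<phi>' i y"
  shows "reidemeister (PG G I) (W I \<sigma> \<phi>) = reidemeister (PG G I) (W I \<sigma>' \<phi>')"
proof (rule reid_cong)
  fix x assume x: "x \<in> carrier (PG G I)"
  show "W I \<sigma> \<phi> x = W I \<sigma>' \<phi>' x"
    unfolding W_def
  proof (rule restrict_ext)
    fix i assume i: "i \<in> I"
    then have "\<sigma> i \<in> I" using permutes_in_image[OF s] by simp
    then have "x (\<sigma> i) \<in> carrier G" using x by auto
    then show "\<phi> i (x (\<sigma> i)) = \<phi>' i (x (\<sigma>' i))" using ss pp i by metis
  qed
qed

lemma W_bij:
  assumes s: "\<sigma> permutes I" and b: "\<forall>i\<in>I. bij_betw (\<phi> i) (carrier G) (carrier G)"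
  shows "bij_betw (W I \<sigma> \<phi>) (carrier (PG G I)) (carrier (PG G I))"
proof (rule bij_betw_imageI)
  have sI: "\<And>i. \<sigma> i \<in> I \<longleftrightarrow> i \<in> I" using permutes_in_image[OF s] by simp
  have iI: "\<And>i. Hilbert_Choice.inv \<sigma> i \<in> I \<longleftrightarrow> i \<in> I" using permutes_in_image[OF permutes_inv[OF s]] by simp
  have si: "\<And>i. \<sigma> (Hilbert_Choice.inv \<sigma> i) = i" "\<And>i. Hilbert_Choice.inv \<sigma> (\<sigma> i) = i" using permutes_inverses[OF s] by auto
  show "inj_on (W I \<sigma> \<phi>) (carrier (PG G I))"
  proof (rule inj_onI)
    fix x y assume x: "x \<in> carrier (PG G I)" and y: "y \<in> carrier (PG G I)" and e: "W I \<sigma> \<phi> x = W I \<sigma> \<phi> y"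
    show "x = y"
    proof (rule ext)
      fix i show "x i = y i"
      proof (cases "i \<in> I")
        case True
        let ?t = "Hilbert_Choice.inv \<sigma> i"
        have t: "?t \<in> I" using True iI by simp
        have "W I \<sigma> \<phi> x ?t = W I \<sigma> \<phi> y ?t" using e by simp
        then have "\<phi> ?t (x i) = \<phi> ?t (y i)" using t si by (simp add: W_def)
        moreover have "x i \<in> carrier G" "y i \<in> carrier G" using x y True by auto
        moreover have "inj_on (\<phi> ?t) (carrier G)" using b t by (simp add: bij_betw_def)
        ultimately show ?thesis by (simp add: inj_on_eq_iff)
      next
        case False then show ?thesis using x y by (auto simp: PiE_iff extensional_def)
      qed
    qed
  qed
  show "W I \<sigma> \<phi> ` carrier (PG G I) = carrier (PG G I)"
  proof
    show "W I \<sigma> \<phi> ` carrier (PG G I) \<subseteq> carrier (PG G I)"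
    proof (rule image_subsetI)
      fix x assume x: "x \<in> carrier (PG G I)"
      have "\<phi> i (x (\<sigma> i)) \<in> carrier G" if "i \<in> I" for i
      proof -
        have "x (\<sigma> i) \<in> carrier G" using x sI that by auto
        then show ?thesis using b that by (auto simp: bij_betw_def)
      qed
      then show "W I \<sigma> \<phi> x \<in> carrier (PG G I)" by (auto simp: W_def)
    qed
    show "carrier (PG G I) \<subseteq> W I \<sigma> \<phi> ` carrier (PG G I)"
    proof
      fix y assume y: "y \<in> carrier (PG G I)"
      define x where "x = (\<lambda>i\<in>I. inv_into (carrier G) (\<phi> (Hilbert_Choice.inv \<sigma> i)) (y (Hilbert_Choice.inv \<sigma> i)))"
      have xC: "x \<in> carrier (PG G I)"
      proof -
        have "inv_into (carrier G) (\<phi> (Hilbert_Choice.inv \<sigma> i)) (y (Hilbert_Choice.inv \<sigma> i)) \<in> carrier G" if "i \<in> I" for i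
        proof -
          have t: "Hilbert_Choice.inv \<sigma> i \<in> I" using iI that by simp
          then have "y (Hilbert_Choice.inv \<sigma> i) \<in> carrier G" using y by auto
          moreover have "\<phi> (Hilbert_Choice.inv \<sigma> i) ` carrier G = carrier G" using b t by (simp add: bij_betw_def)
          ultimately show ?thesis by (metis inv_into_into)
        qed
        then show ?thesis by (auto simp: x_def)
      qed
      have "W I \<sigma> \<phi> x = y"
      proof (rule ext)
        fix i show "W I \<sigma> \<phi> x i = y i"
        proof (cases "i \<in> I")
          case True
          then have "y i \<in> carrier G" using y by auto
          moreover have "bij_betw (\<phi> i) (carrier G) (carrier G)" using b True by simp
          ultimately have "\<phi> i (inv_into (carrier G) (\<phi> i) (y i)) = y i"
            by (simp add: bij_betw_inv_into_right)
          moreover have "\<sigma> i \<in> I" using True sI by simp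
          ultimately show ?thesis using True by (simp add: W_def x_def si)
        next
          case False then show ?thesis using y by (auto simp: W_def PiE_iff extensional_def)
        qed
      qed
      then show "y \<in> W I \<sigma> \<phi> ` carrier (PG G I)" using xC by blast
    qed
  qed
qed

lemma W_auto:
  assumes G: "group G" and s: "\<sigma> permutes I" and a: "\<forall>i\<in>I. \<phi> i \<in> auto G"
  shows "restrict (W I \<sigma> \<phi>) (carrier (PG G I)) \<in> auto (PG G I)"
proof -
  have h: "\<forall>i\<in>I. \<phi> i \<in> hom G G" using a by (simp add: auto_def)
  have b: "\<forall>i\<in>I. bij_betw (\<phi> i) (carrier G) (carrier G)" using a by (simp add: auto_def Bij_def)
  have "restrict (W I \<sigma> \<phi>) (carrier (PG G I)) \<in> hom (PG G I) (PG G I)"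
  proof (rule group.hom_eq[OF _ W_hom[OF G s h]])
    show "group (PG G I)" using G by simp
  qed simp
  moreover have "bij_betw (restrict (W I \<sigma> \<phi>) (carrier (PG G I))) (carrier (PG G I)) (carrier (PG G I))"
    using W_bij[OF s b] by (subst bij_betw_cong[where g="W I \<sigma> \<phi>"]) simp_all
  then have "restrict (W I \<sigma> \<phi>) (carrier (PG G I)) \<in> Bij (carrier (PG G I))"
    unfolding Bij_def by simp
  ultimately show ?thesis by (simp add: auto_def)
qed

lemma construct:
  assumes G: "group G" and fin: "finite I"
  shows "\<forall>c \<theta>. (\<forall>j<c. \<theta> j \<in> auto G) \<longrightarrow> c \<le> card I \<longrightarrow> (c = 0 \<longleftrightarrow> I = {}) \<longrightarrow>
    (\<exists>\<sigma> \<phi>. \<sigma> permutes I \<and> (\<forall>i\<in>I. \<phi> i \<in> auto G) \<and>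
       reidemeister (PG G I) (W I \<sigma> \<phi>) = (\<Prod>j<c. reidemeister G (\<theta> j)))"
  using fin
proof (induction I rule: finite_induct)
  case empty
  show ?case
  proof (intro allI impI)
    fix c :: nat and \<theta> :: "nat \<Rightarrow> 'a \<Rightarrow> 'a"
    assume "c = 0 \<longleftrightarrow> {} = ({} :: nat set)"
    then have c: "c = 0" by simp
    have "reidemeister (PG G {}) (W {} id (\<lambda>_. \<lambda>x\<in>carrier G. x)) = 1"
      by (rule reid_empty[OF G W_hom[OF G]]) auto
    moreover have "(\<lambda>x\<in>carrier G. x) \<in> auto G" using group.id_in_auto[OF G] .
    ultimately show "\<exists>\<sigma> \<phi>. \<sigma> permutes {} \<and> (\<forall>i\<in>{}. \<phi> i \<in> auto G) \<and>
       reidemeister (PG G {}) (W {} \<sigma> \<phi>) = (\<Prod>j<c. reidemeister G (\<theta> j))"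
      using c by (intro exI[of _ id] exI[of _ "\<lambda>_. \<lambda>x\<in>carrier G. x"]) simp
  qed
next
  case (insert k F)
  show ?case
  proof (intro allI impI)
    fix c :: nat and \<theta> :: "nat \<Rightarrow> 'a \<Rightarrow> 'a"
    assume th: "\<forall>j<c. \<theta> j \<in> auto G" and cle: "c \<le> card (insert k F)"
      and c0: "c = 0 \<longleftrightarrow> insert k F = {}"
    have c1: "c \<ge> 1" using c0 by auto
    have cardI: "card (insert k F) = Suc (card F)" using insert by simp
    let ?I = "insert k F"
    let ?goal = "\<exists>\<sigma> \<phi>. \<sigma> permutes ?I \<and> (\<forall>i\<in>?I. \<phi> i \<in> auto G) \<and>
       reidemeister (PG G ?I) (W ?I \<sigma> \<phi>) = (\<Prod>j<c. reidemeister G (\<theta> j))"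
    show ?goal
    proof (cases "F = {}")
      case True
      then have c: "c = 1" using cle c1 cardI by simp
      define \<phi> where "\<phi> = (\<lambda>_::nat. \<theta> 0)"
      have a: "\<forall>i\<in>?I. \<phi> i \<in> auto G" using th c by (simp add: \<phi>_def)
      have h: "\<forall>i\<in>?I. \<phi> i \<in> hom G G" using a auto_hom by blast
      have "reidemeister (PG G ?I) (W ?I id \<phi>) = reidemeister G (\<phi> k) * reidemeister (PG G F) (W F id \<phi>)"
        by (rule reid_fix[OF G insert(2) _ _ h]) auto
      also have "reidemeister (PG G F) (W F id \<phi>) = 1"
        using True reid_empty[OF G W_hom[OF G]] h by simp
      finally show ?thesis using a c by (intro exI[of _ id] exI[of _ \<phi>]) (simp add: \<phi>_def id_def permutes_id[unfolded id_def])
    next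
      case Fne: False
      show ?thesis
      proof (cases "c = 1")
        case False
        then have cc: "c = Suc (c - 1)" "c - 1 \<noteq> 0" "c - 1 \<le> card F" using c1 cle cardI by auto
        have "\<exists>\<sigma> \<phi>. \<sigma> permutes F \<and> (\<forall>i\<in>F. \<phi> i \<in> auto G) \<and>
          reidemeister (PG G F) (W F \<sigma> \<phi>) = (\<Prod>j<c - 1. reidemeister G (\<theta> j))"
          by (rule insert(3)[rule_format]) (use th cc Fne in auto)
        then obtain \<sigma> \<phi> where s: "\<sigma> permutes F" and a: "\<forall>i\<in>F. \<phi> i \<in> auto G"
          and r: "reidemeister (PG G F) (W F \<sigma> \<phi>) = (\<Prod>j<c - 1. reidemeister G (\<theta> j))"
          by blast
        define \<phi>' where "\<phi>' = \<phi>(k := \<theta> (c - 1))"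
        have a': "\<forall>i\<in>?I. \<phi>' i \<in> auto G" using a th cc by (simp add: \<phi>'_def)
        have h': "\<forall>i\<in>?I. \<phi>' i \<in> hom G G" using a' auto_hom by blast
        have s': "\<sigma> permutes ?I" using permutes_subset[OF s] by auto
        have sk: "\<sigma> k = k" using permutes_not_in[OF s] insert(2) by simp
        have "reidemeister (PG G ?I) (W ?I \<sigma> \<phi>') = reidemeister G (\<phi>' k) * reidemeister (PG G F) (W F \<sigma> \<phi>')"
          by (rule reid_fix[OF G insert(2) s' sk h'])
        also have "reidemeister (PG G F) (W F \<sigma> \<phi>') = reidemeister (PG G F) (W F \<sigma> \<phi>)"
          by (rule W_cong_reid[OF s]) (use insert(2) in \<open>auto simp: \<phi>'_def\<close>)
        also have "\<dots> = (\<Prod>j<c - 1. reidemeister G (\<theta> j))" by (rule r)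
        finally have e1: "reidemeister (PG G ?I) (W ?I \<sigma> \<phi>') = reidemeister G (\<theta> (c - 1)) * (\<Prod>j<c - 1. reidemeister G (\<theta> j))"
          using fun_upd_same[of \<phi> k "\<theta> (c - 1)"] unfolding \<phi>'_def[symmetric] by simp
        have pr: "(\<Prod>j<c. reidemeister G (\<theta> j)) = (\<Prod>j<c - 1. reidemeister G (\<theta> j)) * reidemeister G (\<theta> (c - 1))"
          by (subst cc(1)) (simp only: prod.lessThan_Suc)
        have "reidemeister (PG G ?I) (W ?I \<sigma> \<phi>') = (\<Prod>j<c. reidemeister G (\<theta> j))"
          using e1 pr by (simp add: mult.commute)
        then show ?thesis using s' a' by blast
      next
        case True
        have "\<exists>\<sigma> \<phi>. \<sigma> permutes F \<and> (\<forall>i\<in>F. \<phi> i \<in> auto G) \<and>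
          reidemeister (PG G F) (W F \<sigma> \<phi>) = (\<Prod>j<1. reidemeister G (\<theta> j))"
          by (rule insert(3)[rule_format]) (use th True Fne insert(1) in \<open>auto simp: Suc_le_eq card_gt_0_iff\<close>)
        then obtain \<sigma> \<phi> where s: "\<sigma> permutes F" and a: "\<forall>i\<in>F. \<phi> i \<in> auto G"
          and r: "reidemeister (PG G F) (W F \<sigma> \<phi>) = (\<Prod>j<1. reidemeister G (\<theta> j))"
          by blast
        obtain j where j: "j \<in> F" using Fne by auto
        have jk: "j \<noteq> k" using j insert(2) by auto
        define \<phi>' where "\<phi>' = \<phi>(k := (\<lambda>x\<in>carrier G. x))"
        define \<sigma>' where "\<sigma>' = \<sigma> \<circ> Transposition.transpose j k"
        have a': "\<forall>i\<in>?I. \<phi>' i \<in> auto G" using a group.id_in_auto[OF G] by (simp add: \<phi>'_def)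
        have h': "\<forall>i\<in>?I. \<phi>' i \<in> hom G G" using a' auto_hom by blast
        have sI: "\<sigma> permutes ?I" using permutes_subset[OF s] by auto
        have s': "\<sigma>' permutes ?I" unfolding \<sigma>'_def
          by (rule permutes_compose[OF permutes_swap_id sI]) (use j in auto)
        have skk: "\<sigma> k = k" using permutes_not_in[OF s] insert(2) by simp
        have sjF: "\<sigma> j \<in> F" using permutes_in_image[OF s] j by simp
        have s'k: "\<sigma>' k \<noteq> k" using sjF insert(2) by (auto simp: \<sigma>'_def)
        have s'j: "\<sigma>' j = k" using skk by (simp add: \<sigma>'_def)
        note mv = reid_move[OF G insert(2) s' s'k j s'j h']
        have "reidemeister (PG G ?I) (W ?I \<sigma>' \<phi>') = reidemeister (PG G F) (W F (\<sigma>' \<circ> Transposition.transpose j k) (\<phi>'(j := compose (carrier G) (\<phi>' j) (\<phi>' k))))"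
          by (rule mv(3))
        also have "\<dots> = reidemeister (PG G F) (W F \<sigma> \<phi>)"
        proof (rule W_cong_reid[OF mv(1)])
          show "\<forall>i\<in>F. (\<sigma>' \<circ> Transposition.transpose j k) i = \<sigma> i"
            by (simp add: \<sigma>'_def)
          show "\<forall>i\<in>F. \<forall>y\<in>carrier G. (\<phi>'(j := compose (carrier G) (\<phi>' j) (\<phi>' k))) i y = \<phi> i y"
            using insert(2) jk by (auto simp: \<phi>'_def compose_eq)
        qed
        finally show ?thesis using r True s' a' by (intro exI[of _ \<sigma>'] exI[of _ \<phi>']) simp
      qed
    qed
  qed
qed

lemma decompose:
  assumes G: "group G" and fin: "finite I"
  shows "\<forall>\<sigma> \<phi>. \<sigma> permutes I \<longrightarrow> (\<forall>i\<in>I. \<phi> i \<in> auto G) \<longrightarrow>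
    (\<exists>c a. c \<le> card I \<and> (I \<noteq> {} \<longrightarrow> 1 \<le> c) \<and> (\<forall>j<c. a j \<in> spec_R G) \<and>
       reidemeister (PG G I) (W I \<sigma> \<phi>) = (\<Prod>j<c. a j))"
  using fin
proof (induction I rule: finite_induct)
  case empty
  show ?case
  proof (intro allI impI)
    fix \<sigma> :: "nat \<Rightarrow> nat" and \<phi> :: "nat \<Rightarrow> 'a \<Rightarrow> 'a"
    assume "\<sigma> permutes {}" "\<forall>i\<in>{}. \<phi> i \<in> auto G"
    then have "reidemeister (PG G {}) (W {} \<sigma> \<phi>) = 1"
      by (intro reid_empty[OF G W_hom[OF G]]) auto
    then show "\<exists>c a. c \<le> card {} \<and> ({} \<noteq> ({}::nat set) \<longrightarrow> 1 \<le> c) \<and> (\<forall>j<c. a j \<in> spec_R G) \<and>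
       reidemeister (PG G {}) (W {} \<sigma> \<phi>) = (\<Prod>j<c. a j)"
      by (intro exI[of _ 0]) simp
  qed
next
  case (insert k F)
  let ?I = "insert k F"
  show ?case
  proof (intro allI impI)
    fix \<sigma> :: "nat \<Rightarrow> nat" and \<phi> :: "nat \<Rightarrow> 'a \<Rightarrow> 'a"
    assume s: "\<sigma> permutes ?I" and a: "\<forall>i\<in>?I. \<phi> i \<in> auto G"
    have h: "\<forall>i\<in>?I. \<phi> i \<in> hom G G" using a auto_hom by blast
    have cardI: "card ?I = Suc (card F)" using insert by simp
    show "\<exists>c a. c \<le> card ?I \<and> (?I \<noteq> {} \<longrightarrow> 1 \<le> c) \<and> (\<forall>j<c. a j \<in> spec_R G) \<and>
       reidemeister (PG G ?I) (W ?I \<sigma> \<phi>) = (\<Prod>j<c. a j)"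
    proof (cases "\<sigma> k = k")
      case True
      have sF: "\<sigma> permutes F" by (rule permutes_superset[OF s]) (use True in auto)
      have "\<exists>c a. c \<le> card F \<and> (F \<noteq> {} \<longrightarrow> 1 \<le> c) \<and> (\<forall>j<c. a j \<in> spec_R G) \<and>
       reidemeister (PG G F) (W F \<sigma> \<phi>) = (\<Prod>j<c. a j)"
        by (rule insert(3)[rule_format]) (use sF a in auto)
      then obtain c b where c: "c \<le> card F" and b: "\<forall>j<c. b j \<in> spec_R G"
        and r: "reidemeister (PG G F) (W F \<sigma> \<phi>) = (\<Prod>j<c. b j)" by blast
      define b' where "b' = b(c := reidemeister G (\<phi> k))"
      have "reidemeister (PG G ?I) (W ?I \<sigma> \<phi>) = reidemeister G (\<phi> k) * reidemeister (PG G F) (W F \<sigma> \<phi>)"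
        by (rule reid_fix[OF G insert(2) s True h])
      also have "\<dots> = (\<Prod>j<Suc c. b' j)"
      proof -
        have "(\<Prod>j<c. b' j) = (\<Prod>j<c. b j)" by (rule prod.cong) (auto simp: b'_def)
        then show ?thesis using r by (simp add: b'_def mult.commute)
      qed
      finally have "reidemeister (PG G ?I) (W ?I \<sigma> \<phi>) = (\<Prod>j<Suc c. b' j)" .
      moreover have "\<forall>j<Suc c. b' j \<in> spec_R G"
        using b a by (auto simp: b'_def spec_R_def less_Suc_eq)
      ultimately show ?thesis using c cardI by (intro exI[of _ "Suc c"] exI[of _ b']) simp
    next
      case False
      define j where "j = Hilbert_Choice.inv \<sigma> k"
      have sj: "\<sigma> j = k" using permutes_inverses[OF s] by (simp add: j_def)
      have jI: "j \<in> ?I" using permutes_in_image[OF permutes_inv[OF s]] by (simp add: j_def)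
      have jF: "j \<in> F" using jI sj False by auto
      note mv = reid_move[OF G insert(2) s False jF sj h]
      let ?s' = "\<sigma> \<circ> Transposition.transpose j k"
      let ?p' = "\<phi>(j := compose (carrier G) (\<phi> j) (\<phi> k))"
      have a': "\<forall>i\<in>F. ?p' i \<in> auto G" using a jF auto_compose[OF G] by auto
      have "\<exists>c a. c \<le> card F \<and> (F \<noteq> {} \<longrightarrow> 1 \<le> c) \<and> (\<forall>j<c. a j \<in> spec_R G) \<and>
       reidemeister (PG G F) (W F ?s' ?p') = (\<Prod>j<c. a j)"
        by (rule insert(3)[rule_format]) (use mv(1) a' in auto)
      then obtain c b where c: "c \<le> card F" "F \<noteq> {} \<longrightarrow> 1 \<le> c" and b: "\<forall>j<c. b j \<in> spec_R G"
        and r: "reidemeister (PG G F) (W F ?s' ?p') = (\<Prod>j<c. b j)" by blast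
      have "reidemeister (PG G ?I) (W ?I \<sigma> \<phi>) = (\<Prod>j<c. b j)" using mv(3) r by simp
      then show ?thesis using c b cardI jF by (intro exI[of _ c] exI[of _ b]) auto
    qed
  qed
qed

theorem mainTheorem6:
  fixes G :: "('a, 'b) monoid_scheme" and n :: nat
  assumes "group G" and "n \<ge> 1"
  shows "(\<Union>i\<in>{1..n}. prod_set (spec_R G) i) \<subseteq> spec_R (dir_power G n) \<and>
         ((\<forall>\<psi>\<in>auto (dir_power G n). \<exists>\<phi> \<sigma>. \<sigma> permutes {..<n} \<and> (\<forall>i<n. \<phi> i \<in> auto G) \<and>
            (\<forall>x\<in>carrier (dir_power G n). \<psi> x = (\<lambda>i\<in>{..<n}. \<phi> i (x (\<sigma> i)))))
          \<longrightarrow> (\<Union>i\<in>{1..n}. prod_set (spec_R G) i) = spec_R (dir_power G n))"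
proof -
  note G = assms(1)
  have dp: "dir_power G n = PG G {..<n}" by (simp add: dir_power_def)
  have sub: "(\<Union>i\<in>{1..n}. prod_set (spec_R G) i) \<subseteq> spec_R (dir_power G n)"
  proof
    fix x assume "x \<in> (\<Union>i\<in>{1..n}. prod_set (spec_R G) i)"
    then obtain i a where i: "1 \<le> i" "i \<le> n" and a: "\<forall>j<i. a j \<in> spec_R G" and x: "x = (\<Prod>j<i. a j)"
      by (auto simp: prod_set_def)
    have "\<forall>j. \<exists>t. j < i \<longrightarrow> t \<in> auto G \<and> a j = reidemeister G t"
      using a by (auto simp: spec_R_def)
    then obtain \<theta> where th: "\<And>j. j < i \<Longrightarrow> \<theta> j \<in> auto G \<and> a j = reidemeister G (\<theta> j)"
      by metis
    have "\<exists>\<sigma> \<phi>. \<sigma> permutes {..<n} \<and> (\<forall>i\<in>{..<n}. \<phi> i \<in> auto G) \<and>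
       reidemeister (PG G {..<n}) (W {..<n} \<sigma> \<phi>) = (\<Prod>j<i. reidemeister G (\<theta> j))"
      by (rule construct[OF G, rule_format]) (use th i assms(2) in \<open>auto simp: lessThan_empty_iff\<close>)
    then obtain \<sigma> \<phi> where s: "\<sigma> permutes {..<n}" and ph: "\<forall>i\<in>{..<n}. \<phi> i \<in> auto G"
      and r: "reidemeister (PG G {..<n}) (W {..<n} \<sigma> \<phi>) = (\<Prod>j<i. reidemeister G (\<theta> j))" by blast
    have au: "restrict (W {..<n} \<sigma> \<phi>) (carrier (PG G {..<n})) \<in> auto (PG G {..<n})"
      by (rule W_auto[OF G s ph])
    have "reidemeister (PG G {..<n}) (restrict (W {..<n} \<sigma> \<phi>) (carrier (PG G {..<n})))
        = reidemeister (PG G {..<n}) (W {..<n} \<sigma> \<phi>)" by (rule reid_cong) simp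
    also have "\<dots> = x" unfolding r x using th by (intro prod.cong) auto
    finally show "x \<in> spec_R (dir_power G n)" unfolding dp spec_R_def using au by (metis image_eqI)
  qed
  moreover have "(\<forall>\<psi>\<in>auto (dir_power G n). \<exists>\<phi> \<sigma>. \<sigma> permutes {..<n} \<and> (\<forall>i<n. \<phi> i \<in> auto G) \<and>
            (\<forall>x\<in>carrier (dir_power G n). \<psi> x = (\<lambda>i\<in>{..<n}. \<phi> i (x (\<sigma> i)))))
          \<longrightarrow> (\<Union>i\<in>{1..n}. prod_set (spec_R G) i) = spec_R (dir_power G n)"
  proof
    assume hyp: "\<forall>\<psi>\<in>auto (dir_power G n). \<exists>\<phi> \<sigma>. \<sigma> permutes {..<n} \<and> (\<forall>i<n. \<phi> i \<in> auto G) \<and>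
            (\<forall>x\<in>carrier (dir_power G n). \<psi> x = (\<lambda>i\<in>{..<n}. \<phi> i (x (\<sigma> i))))"
    have "spec_R (dir_power G n) \<subseteq> (\<Union>i\<in>{1..n}. prod_set (spec_R G) i)"
    proof
      fix x assume "x \<in> spec_R (dir_power G n)"
      then obtain \<psi> where ps: "\<psi> \<in> auto (dir_power G n)" and x: "x = reidemeister (dir_power G n) \<psi>"
        by (auto simp: spec_R_def)
      obtain \<phi> \<sigma> where s: "\<sigma> permutes {..<n}" and ph: "\<forall>i<n. \<phi> i \<in> auto G"
        and e: "\<forall>x\<in>carrier (dir_power G n). \<psi> x = (\<lambda>i\<in>{..<n}. \<phi> i (x (\<sigma> i)))"
        using hyp ps by blast
      have "x = reidemeister (PG G {..<n}) (W {..<n} \<sigma> \<phi>)"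
        unfolding x dp by (rule reid_cong) (use e dp in \<open>simp add: W_def\<close>)
      moreover have "\<exists>c a. c \<le> card {..<n} \<and> ({..<n} \<noteq> {} \<longrightarrow> 1 \<le> c) \<and> (\<forall>j<c. a j \<in> spec_R G) \<and>
       reidemeister (PG G {..<n}) (W {..<n} \<sigma> \<phi>) = (\<Prod>j<c. a j)"
        by (rule decompose[OF G, rule_format]) (use s ph in auto)
      ultimately obtain c a where "c \<le> n" "1 \<le> c" "\<forall>j<c. a j \<in> spec_R G" "x = (\<Prod>j<c. a j)"
        using assms(2) by (auto simp: lessThan_empty_iff)
      then show "x \<in> (\<Union>i\<in>{1..n}. prod_set (spec_R G) i)"
        by (auto simp: prod_set_def)
    qed
    then show "(\<Union>i\<in>{1..n}. prod_set (spec_R G) i) = spec_R (dir_power G n)" using sub by blast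
  qed
  ultimately show ?thesis by blast
qed

end
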